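(* Let $\mathcal{M}$ be a measure space which is a finite disjoint union $\mathcal{M}=\mathcal{X}_1\cup\cdots\cup\mathcal{X}_N$ of measurable sets with $|\mathcal{X}_j|=\omega_j>0$, and let $x_j\in\mathcal{X}_j$ for $j=1,\dots,N$. Let $1\leqslant p,q\leqslant+\infty$ with $1/p+1/q=1$, and let $\Phi$ be a measurable kernel on $\mathcal{M}\times\mathcal{M}$ such that $\{\int_{\mathcal{M}}|\Phi(x,y)|^q\,dy\}^{1/q}<+\infty$ for every $x$ and $\{\int_{\mathcal{M}}(\int_{\mathcal{M}}|\Phi(x,y)|\,dx)^q\,dy\}^{1/q}<+\infty$ (with the usual essential supremum interpretation when $q=+\infty$). Then the functional $\mathcal{E}_{\mathbf{x},\boldsymbol\omega}$ is well defined and continuous on $\mathbb{H}^{\Phi}_p(\mathcal{M})$ and its norm is \[ \|\mathcal{E}_{\mathbf{x},\boldsymbol\omega}\|_{\Phi,p}=\Big\{\int_{\mathcal{M}}\Big|\sum_{j=1}^N\int_{\mathcal{X}_j}\big(\Phi(x_j,y)-\Phi(x,y)\big)\,dx\Big|^q\,dy\Big\}^{1/q}. \]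
   Context: $\mathbb{H}^{\Phi}_p(\mathcal{M})$ is the space of all potentials $f(x)=\int_{\mathcal{M}}\Phi(x,y)g(y)\,dy$ with $g\in L^p(\mathcal{M})$ (defined pointwise for every $x$), with norm $\|f\|_{\mathbb{H}^\Phi_p}=\inf\{\int_{\mathcal{M}}|g|^p\}^{1/p}$ over all $g$ whose potential is $f$. $\mathcal{E}_{\mathbf{x},\boldsymbol\omega}(f)=\sum_{j=1}^N\omega_jf(x_j)-\int_{\mathcal{M}}f(x)\,dx$, and $\|\mathcal{E}_{\mathbf{x},\boldsymbol\omega}\|_{\Phi,p}=\sup\{|\mathcal{E}_{\mathbf{x},\boldsymbol\omega}(f)|/\|f\|_{\mathbb{H}^\Phi_p(\mathcal{M})}\}$ is its norm as a functional on $\mathbb{H}^\Phi_p(\mathcal{M})$. *)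

theory Defs
  imports "HOL-Analysis.Analysis" "HOL-Probability.Essential_Supremum"
begin

definition epow :: "ennreal \<Rightarrow> real \<Rightarrow> ennreal" where
  "epow t r = (if t = \<infinity> then \<infinity> else ennreal (enn2real t powr r))"

definition lpn :: "'a measure \<Rightarrow> ennreal \<Rightarrow> ('a \<Rightarrow> ennreal) \<Rightarrow> ennreal" where
  "lpn M p h = (if p = \<infinity> then e2ennreal (esssup M (\<lambda>x. enn2ereal (h x)))
     else epow (\<integral>\<^sup>+ x. epow (h x) (enn2real p) \<partial>M) (1 / enn2real p))"

definition is_potential :: "'a measure \<Rightarrow> ennreal \<Rightarrow> ('a \<Rightarrow> 'a \<Rightarrow> real) \<Rightarrow> ('a \<Rightarrow> real) \<Rightarrow> ('a \<Rightarrow> real) \<Rightarrow> bool" where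
  "is_potential M p \<Phi> g f \<longleftrightarrow> g \<in> borel_measurable M \<and> lpn M p (\<lambda>y. ennreal \<bar>g y\<bar>) < \<infinity> \<and>
     (\<forall>x\<in>space M. integrable M (\<lambda>y. \<Phi> x y * g y) \<and> f x = (\<integral> y. \<Phi> x y * g y \<partial>M))"

definition in_H :: "'a measure \<Rightarrow> ennreal \<Rightarrow> ('a \<Rightarrow> 'a \<Rightarrow> real) \<Rightarrow> ('a \<Rightarrow> real) \<Rightarrow> bool" where
  "in_H M p \<Phi> f \<longleftrightarrow> (\<exists>g. is_potential M p \<Phi> g f)"

definition H_norm :: "'a measure \<Rightarrow> ennreal \<Rightarrow> ('a \<Rightarrow> 'a \<Rightarrow> real) \<Rightarrow> ('a \<Rightarrow> real) \<Rightarrow> ennreal" where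
  "H_norm M p \<Phi> f = (INF g \<in> {g. is_potential M p \<Phi> g f}. lpn M p (\<lambda>y. ennreal \<bar>g y\<bar>))"

definition quad_err :: "'a measure \<Rightarrow> nat \<Rightarrow> (nat \<Rightarrow> 'a) \<Rightarrow> (nat \<Rightarrow> real) \<Rightarrow> ('a \<Rightarrow> real) \<Rightarrow> real" where
  "quad_err M N xs \<omega> f = (\<Sum>j<N. \<omega> j * f (xs j)) - (\<integral> x. f x \<partial>M)"

definition err_norm :: "'a measure \<Rightarrow> ennreal \<Rightarrow> ('a \<Rightarrow> 'a \<Rightarrow> real) \<Rightarrow> nat \<Rightarrow> (nat \<Rightarrow> 'a) \<Rightarrow> (nat \<Rightarrow> real) \<Rightarrow> ennreal" where
  "err_norm M p \<Phi> N xs \<omega> = (SUP f \<in> {f. in_H M p \<Phi> f \<and> H_norm M p \<Phi> f \<noteq> 0}.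
      ennreal \<bar>quad_err M N xs \<omega> f\<bar> / H_norm M p \<Phi> f)"

end

theory Submission
  imports Defs
begin

lemma inv_eq_1: "inverse (q::ennreal) = 1 \<Longrightarrow> q = 1"
proof (cases q rule: ennreal_cases)
  case (real s)
  assume h: "inverse q = 1"
  then have "s > 0" using real by (cases "s = 0") auto
  then show ?thesis using h real by (simp add: inverse_ennreal)
qed auto

lemma a1: "p \<noteq> (\<infinity>::ennreal) \<Longrightarrow> \<exists>r\<ge>0. p = ennreal r" 
  by (cases p rule: ennreal_cases) auto
lemma a2: "1 \<le> ennreal r \<Longrightarrow> r \<ge> 0 \<Longrightarrow> 1 \<le> r"
  by (metis ennreal_1 ennreal_le_iff)
lemma a3: "r \<ge> 1 \<Longrightarrow> s \<ge> 1 \<Longrightarrow> inverse (ennreal r) + inverse (ennreal s) = 1 \<Longrightarrow> 1/r + 1/s = (1::real)"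
proof -
  assume r: "r \<ge> 1" and s: "s \<ge> 1" and h: "inverse (ennreal r) + inverse (ennreal s) = 1"
  have "inverse (ennreal r) + inverse (ennreal s) = ennreal (1/r + 1/s)"
    using r s by (simp add: inverse_ennreal ennreal_plus inverse_eq_divide)
  with h show ?thesis by simp
qed

lemma conj_cases:
  fixes p q :: ennreal
  assumes p1: "1 \<le> p" and q1: "1 \<le> q" and conj: "inverse p + inverse q = 1"
  obtains "p = \<infinity>" "q = 1" | "p = 1" "q = \<infinity>"
   | r s where "p = ennreal r" "q = ennreal s" "r > 1" "s > 1" "1/r + 1/s = 1"
proof -
  consider "p = \<infinity>" | "q = \<infinity>" | "p \<noteq> \<infinity>" "q \<noteq> \<infinity>" by auto
  then show ?thesis
  proof cases
    case 1
    then have "inverse q = 1" using conj by simp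
    then have "q = 1" by (rule inv_eq_1)
    then show ?thesis using 1 that by auto
  next
    case 2
    then have "inverse p = 1" using conj by simp
    then have "p = 1" by (rule inv_eq_1)
    then show ?thesis using 2 that by auto
  next
    case 3
    obtain r where r0: "p = ennreal r" "r \<ge> 0" using 3 a1 by blast
    obtain s where s0: "q = ennreal s" "s \<ge> 0" using 3 a1 by blast
    have r1: "r \<ge> 1" using a2 p1 r0 by blast
    have s1: "s \<ge> 1" using a2 q1 s0 by blast
    have rs: "1/r + 1/s = 1" using a3[OF r1 s1] conj r0 s0 by blast
    have "r \<noteq> 1" using rs s1 by auto
    moreover have "s \<noteq> 1" using rs r1 by auto
    ultimately show ?thesis using that r0 s0 r1 s1 rs by auto
  qed
qed

lemma epow_ennreal: "a \<ge> 0 \<Longrightarrow> epow (ennreal a) r = ennreal (a powr r)"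
  by (simp add: epow_def)

lemma epow_1[simp]: "epow t 1 = t"
  by (cases t) (auto simp: epow_def)

lemma epow_less_top_iff: "r > 0 \<Longrightarrow> epow t r < \<infinity> \<longleftrightarrow> t < \<infinity>"
  by (cases t) (auto simp: epow_def)

lemma epow_eq_0_iff: "r > 0 \<Longrightarrow> epow t r = 0 \<longleftrightarrow> t = 0"
  by (cases t) (auto simp: epow_def)

lemma epow_top[simp]: "epow \<infinity> r = \<infinity>"
  by (simp add: epow_def)

lemma lpn_fin: "r \<ge> 1 \<Longrightarrow> lpn M (ennreal r) (\<lambda>x. ennreal \<bar>g x\<bar>) =
   epow (\<integral>\<^sup>+ x. ennreal (\<bar>g x\<bar> powr r) \<partial>M) (1 / r)"
  by (simp add: lpn_def epow_ennreal)

lemma lpn_one: "lpn M 1 (\<lambda>x. ennreal \<bar>g x\<bar>) = (\<integral>\<^sup>+ x. ennreal \<bar>g x\<bar> \<partial>M)"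
  using lpn_fin[of 1 M g] by simp

lemma lpn_inf: "lpn M \<infinity> h = e2ennreal (esssup M (\<lambda>x. enn2ereal (h x)))"
  by (simp add: lpn_def)

lemma lpn_inf_AE:
  "AE x in M. h x \<le> lpn M \<infinity> h"
proof -
  have "AE x in M. enn2ereal (h x) \<le> esssup M (\<lambda>x. enn2ereal (h x))" by (rule esssup_AE)
  then show ?thesis unfolding lpn_inf
    by eventually_elim (metis e2ennreal_enn2ereal e2ennreal_mono)
qed

lemma lpn_inf_le:
  assumes "h \<in> borel_measurable M" "AE x in M. h x \<le> C"
  shows "lpn M \<infinity> h \<le> C"
proof -
  have "esssup M (\<lambda>x. enn2ereal (h x)) \<le> enn2ereal C"
    using assms by (intro esssup_I) (auto elim!: eventually_mono simp: less_eq_ennreal.rep_eq)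
  then show ?thesis unfolding lpn_inf
    by (metis e2ennreal_enn2ereal e2ennreal_mono)
qed

lemma holder_1_inf:
  fixes f g :: "'a \<Rightarrow> real"
  assumes [measurable]: "f \<in> borel_measurable M" "g \<in> borel_measurable M"
  shows "(\<integral>\<^sup>+ x. ennreal \<bar>f x * g x\<bar> \<partial>M) \<le> lpn M 1 (\<lambda>x. ennreal \<bar>f x\<bar>) * lpn M \<infinity> (\<lambda>x. ennreal \<bar>g x\<bar>)"
proof -
  let ?S = "lpn M \<infinity> (\<lambda>x. ennreal \<bar>g x\<bar>)"
  have "(\<integral>\<^sup>+ x. ennreal \<bar>f x * g x\<bar> \<partial>M) = (\<integral>\<^sup>+ x. ennreal \<bar>f x\<bar> * ennreal \<bar>g x\<bar> \<partial>M)"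
    by (simp add: abs_mult ennreal_mult)
  also have "\<dots> \<le> (\<integral>\<^sup>+ x. ennreal \<bar>f x\<bar> * ?S \<partial>M)"
    using lpn_inf_AE[of "\<lambda>x. ennreal \<bar>g x\<bar>" M]
    by (intro nn_integral_mono_AE) (auto elim!: eventually_mono intro: mult_left_mono)
  also have "\<dots> = (\<integral>\<^sup>+ x. ennreal \<bar>f x\<bar> \<partial>M) * ?S"
    by (rule nn_integral_multc) simp
  finally show ?thesis by (simp add: lpn_one)
qed

lemma AE_zero_of_nn_integral_powr:
  fixes f :: "'a \<Rightarrow> real"
  assumes [measurable]: "f \<in> borel_measurable M" and r: "r > 0"
    and "(\<integral>\<^sup>+ x. ennreal (\<bar>f x\<bar> powr r) \<partial>M) = 0"
  shows "AE x in M. f x = 0"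
proof -
  have "AE x in M. ennreal (\<bar>f x\<bar> powr r) = 0"
    using assms by (subst nn_integral_0_iff_AE[symmetric]) auto
  then show ?thesis
    by eventually_elim (auto simp: ennreal_eq_0_iff)
qed

lemma holder_fin:
  fixes f g :: "'a \<Rightarrow> real"
  assumes [measurable]: "f \<in> borel_measurable M" "g \<in> borel_measurable M"
    and r: "r > 1" and s: "s > 1" and rs: "1/r + 1/s = 1"
  shows "(\<integral>\<^sup>+ x. ennreal \<bar>f x * g x\<bar> \<partial>M) \<le>
     epow (\<integral>\<^sup>+ x. ennreal (\<bar>f x\<bar> powr r) \<partial>M) (1/r) * epow (\<integral>\<^sup>+ x. ennreal (\<bar>g x\<bar> powr s) \<partial>M) (1/s)"
proof -
  define A where "A = (\<integral>\<^sup>+ x. ennreal (\<bar>f x\<bar> powr r) \<partial>M)"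
  define B where "B = (\<integral>\<^sup>+ x. ennreal (\<bar>g x\<bar> powr s) \<partial>M)"
  have r0: "1/r > 0" and s0: "1/s > 0" using r s by auto
  consider "A = 0" | "B = 0" | "A = \<infinity>" "B \<noteq> 0" | "B = \<infinity>" "A \<noteq> 0" | "A \<noteq> 0" "B \<noteq> 0" "A \<noteq> \<infinity>" "B \<noteq> \<infinity>"
    by blast
  then have "(\<integral>\<^sup>+ x. ennreal \<bar>f x * g x\<bar> \<partial>M) \<le> epow A (1/r) * epow B (1/s)"
  proof cases
    case 1
    then have "AE x in M. f x = 0" using r unfolding A_def by (intro AE_zero_of_nn_integral_powr) auto
    then have "(\<integral>\<^sup>+ x. ennreal \<bar>f x * g x\<bar> \<partial>M) = 0"
      by (subst nn_integral_0_iff_AE) (auto elim!: eventually_mono)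
    then show ?thesis by simp
  next
    case 2
    then have "AE x in M. g x = 0" using s unfolding B_def by (intro AE_zero_of_nn_integral_powr) auto
    then have "(\<integral>\<^sup>+ x. ennreal \<bar>f x * g x\<bar> \<partial>M) = 0"
      by (subst nn_integral_0_iff_AE) (auto elim!: eventually_mono)
    then show ?thesis by simp
  next
    case 3
    then have "epow B (1/s) \<noteq> 0" using epow_eq_0_iff[OF s0] by auto
    moreover have "epow A (1/r) = top" using 3 by (simp add: epow_def)
    ultimately show ?thesis by (simp add: ennreal_top_mult)
  next
    case 4
    then have "epow A (1/r) \<noteq> 0" using epow_eq_0_iff[OF r0] by auto
    moreover have "epow B (1/s) = top" using 4 by (simp add: epow_def)
    ultimately show ?thesis by (simp add: ennreal_mult_top)
  next
    case 5
    define a where "a = enn2real A"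
    define b where "b = enn2real B"
    have Aa: "A = ennreal a" and Bb: "B = ennreal b" using 5 unfolding a_def b_def
      by (auto simp: less_top)
    have a0: "a > 0" using 5(1) Aa ennreal_eq_0_iff[of a] by (metis not_less)
    have b0: "b > 0" using 5(2) Bb ennreal_eq_0_iff[of b] by (metis not_less)
    have intf: "integrable M (\<lambda>x. \<bar>f x\<bar> powr r)"
      using 5 unfolding A_def by (intro integrableI_bounded) (auto simp: less_top)
    have intg: "integrable M (\<lambda>x. \<bar>g x\<bar> powr s)"
      using 5 unfolding B_def by (intro integrableI_bounded) (auto simp: less_top)
    have If: "(\<integral>x. \<bar>f x\<bar> powr r \<partial>M) = a"
    proof -
      have "ennreal (\<integral>x. \<bar>f x\<bar> powr r \<partial>M) = A" unfolding A_def
        by (rule nn_integral_eq_integral[symmetric]) (use intf in auto)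
      moreover have "0 \<le> (\<integral>x. \<bar>f x\<bar> powr r \<partial>M)" by (intro integral_nonneg_AE) simp
      ultimately show ?thesis using Aa a0 ennreal_inj[of _ a] by (metis less_imp_le)
    qed
    have Ig: "(\<integral>x. \<bar>g x\<bar> powr s \<partial>M) = b"
    proof -
      have "ennreal (\<integral>x. \<bar>g x\<bar> powr s \<partial>M) = B" unfolding B_def
        by (rule nn_integral_eq_integral[symmetric]) (use intg in auto)
      moreover have "0 \<le> (\<integral>x. \<bar>g x\<bar> powr s \<partial>M)" by (intro integral_nonneg_AE) simp
      ultimately show ?thesis using Bb b0 ennreal_inj[of _ b] by (metis less_imp_le)
    qed
    define C where "C = a powr (1/r) * b powr (1/s)"
    have C0: "C > 0" using a0 b0 by (simp add: C_def)
    define bnd where "bnd x = C * (\<bar>f x\<bar> powr r / (r * a) + \<bar>g x\<bar> powr s / (s * b))" for x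
    have pt: "\<bar>f x * g x\<bar> \<le> bnd x" for x
    proof -
      define \<alpha> where "\<alpha> = \<bar>f x\<bar> / a powr (1/r)"
      define \<beta> where "\<beta> = \<bar>g x\<bar> / b powr (1/s)"
      have y: "\<alpha> * \<beta> \<le> \<alpha> powr r / r + \<beta> powr s / s"
        by (rule Youngs_inequality) (use r s rs in \<open>auto simp: \<alpha>_def \<beta>_def\<close>)
      have ar: "\<alpha> powr r = \<bar>f x\<bar> powr r / a"
        using a0 r by (simp add: \<alpha>_def powr_divide powr_powr)
      have bs: "\<beta> powr s = \<bar>g x\<bar> powr s / b"
        using b0 s by (simp add: \<beta>_def powr_divide powr_powr)
      have "\<bar>f x * g x\<bar> = C * (\<alpha> * \<beta>)"
        using a0 b0 by (simp add: C_def \<alpha>_def \<beta>_def abs_mult)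
      also have "\<dots> \<le> C * (\<alpha> powr r / r + \<beta> powr s / s)"
        using y C0 by (intro mult_left_mono) auto
      also have "\<dots> = bnd x" by (simp add: bnd_def ar bs field_simps)
      finally show ?thesis .
    qed
    have intb: "integrable M bnd"
      unfolding bnd_def using intf intg by auto
    have Ib: "(\<integral>x. bnd x \<partial>M) = C"
    proof -
      have "(\<integral>x. bnd x \<partial>M) = C * ((\<integral>x. \<bar>f x\<bar> powr r \<partial>M) / (r * a) + (\<integral>x. \<bar>g x\<bar> powr s \<partial>M) / (s * b))"
        unfolding bnd_def using intf intg by (simp add: integral_add)
      also have "\<dots> = C * (1/r + 1/s)" using a0 b0 by (simp add: If Ig)
      finally show ?thesis using rs by simp
    qed
    have intfg: "integrable M (\<lambda>x. \<bar>f x * g x\<bar>)"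
      by (rule Bochner_Integration.integrable_bound[OF intb]) (use pt in \<open>auto intro!: AE_I2 order_trans[OF _ abs_ge_self]\<close>)
    have "(\<integral>\<^sup>+ x. ennreal \<bar>f x * g x\<bar> \<partial>M) \<le> (\<integral>\<^sup>+ x. ennreal (bnd x) \<partial>M)"
      using pt by (intro nn_integral_mono ennreal_leI) auto
    also have "\<dots> = ennreal C"
    proof -
      have "AE x in M. 0 \<le> bnd x" using pt by (auto intro: order_trans[OF abs_ge_zero])
      then show ?thesis using nn_integral_eq_integral[OF intb] Ib by simp
    qed
    also have "ennreal C = epow A (1/r) * epow B (1/s)"
      using a0 b0 by (simp add: Aa Bb epow_ennreal C_def ennreal_mult)
    finally show ?thesis .
  qed
  then show ?thesis by (simp add: A_def B_def)
qed

lemma holder: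
  fixes f g :: "'a \<Rightarrow> real" and p q :: ennreal
  assumes [measurable]: "f \<in> borel_measurable M" "g \<in> borel_measurable M"
    and p1: "1 \<le> p" and q1: "1 \<le> q" and conj: "inverse p + inverse q = 1"
  shows "(\<integral>\<^sup>+ x. ennreal \<bar>f x * g x\<bar> \<partial>M) \<le> lpn M p (\<lambda>x. ennreal \<bar>f x\<bar>) * lpn M q (\<lambda>x. ennreal \<bar>g x\<bar>)"
  using p1 q1 conj
proof (cases rule: conj_cases)
  case 1
  then show ?thesis using holder_1_inf[of g M f] by (simp add: mult.commute)
next
  case 2
  then show ?thesis using holder_1_inf[of f M g] by simp
next
  case (3 r s)
  then show ?thesis using holder_fin[of f M g r s] by (simp add: lpn_fin)
qed

lemma sharp_inf1:
  fixes K :: "'a \<Rightarrow> real"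
  assumes [measurable]: "K \<in> borel_measurable M"
    and fin: "lpn M 1 (\<lambda>y. ennreal \<bar>K y\<bar>) < \<infinity>"
    and c0: "0 < c" and cK: "c < lpn M 1 (\<lambda>y. ennreal \<bar>K y\<bar>)"
  shows "\<exists>g. g \<in> borel_measurable M \<and> lpn M \<infinity> (\<lambda>y. ennreal \<bar>g y\<bar>) < \<infinity> \<and>
     integrable M (\<lambda>y. K y * g y) \<and> 0 < (\<integral>y. K y * g y \<partial>M) \<and>
     c * lpn M \<infinity> (\<lambda>y. ennreal \<bar>g y\<bar>) \<le> ennreal (\<integral>y. K y * g y \<partial>M)"
proof (intro exI[of _ "\<lambda>y. sgn (K y)"] conjI)
  show "(\<lambda>y. sgn (K y)) \<in> borel_measurable M" by measurable
  have eq: "\<And>y. K y * sgn (K y) = \<bar>K y\<bar>" by (simp add: abs_sgn)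
  have L1: "lpn M \<infinity> (\<lambda>y. ennreal \<bar>sgn (K y)\<bar>) \<le> 1"
    by (rule lpn_inf_le) auto
  then show "lpn M \<infinity> (\<lambda>y. ennreal \<bar>sgn (K y)\<bar>) < \<infinity>"
    by (simp add: le_less_trans)
  have I: "(\<integral>\<^sup>+ y. ennreal \<bar>K y\<bar> \<partial>M) < \<infinity>" using fin by (simp add: lpn_one)
  show int: "integrable M (\<lambda>y. K y * sgn (K y))"
    unfolding eq using I by (intro integrableI_bounded) auto
  have II: "(\<integral>\<^sup>+ y. ennreal \<bar>K y\<bar> \<partial>M) = ennreal (\<integral>y. K y * sgn (K y) \<partial>M)"
    unfolding eq by (rule nn_integral_eq_integral) (use int[unfolded eq] in auto)
  have "c < ennreal (\<integral>y. K y * sgn (K y) \<partial>M)" using cK II by (simp add: lpn_one)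
  then show "0 < (\<integral>y. K y * sgn (K y) \<partial>M)"
    using c0 by (metis ennreal_le_iff2 leD less_trans not_le_imp_less ennreal_0 ennreal_less_zero_iff)
  have "c * lpn M \<infinity> (\<lambda>y. ennreal \<bar>sgn (K y)\<bar>) \<le> c * 1"
    using L1 by (intro mult_left_mono) auto
  also have "\<dots> \<le> ennreal (\<integral>y. K y * sgn (K y) \<partial>M)" using cK II by (simp add: lpn_one)
  finally show "c * lpn M \<infinity> (\<lambda>y. ennreal \<bar>sgn (K y)\<bar>) \<le> ennreal (\<integral>y. K y * sgn (K y) \<partial>M)" .
qed


lemma sharp_fin:
  fixes K :: "'a \<Rightarrow> real"
  assumes [measurable]: "K \<in> borel_measurable M"
    and r: "r > 1" and s: "s > 1" and rs: "1/r + 1/s = 1"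
    and fin: "lpn M (ennreal s) (\<lambda>y. ennreal \<bar>K y\<bar>) < \<infinity>"
    and c0: "0 < c" and cK: "c < lpn M (ennreal s) (\<lambda>y. ennreal \<bar>K y\<bar>)"
  shows "\<exists>g. g \<in> borel_measurable M \<and> lpn M (ennreal r) (\<lambda>y. ennreal \<bar>g y\<bar>) < \<infinity> \<and>
     integrable M (\<lambda>y. K y * g y) \<and> 0 < (\<integral>y. K y * g y \<partial>M) \<and>
     c * lpn M (ennreal r) (\<lambda>y. ennreal \<bar>g y\<bar>) \<le> ennreal (\<integral>y. K y * g y \<partial>M)"
proof -
  define I where "I = (\<integral>\<^sup>+ y. ennreal (\<bar>K y\<bar> powr s) \<partial>M)"
  define g where "g y = sgn (K y) * \<bar>K y\<bar> powr (s - 1)" for y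
  have s0: "1/s > 0" and r0: "1/r > 0" using r s by auto
  have LK: "lpn M (ennreal s) (\<lambda>y. ennreal \<bar>K y\<bar>) = epow I (1/s)"
    unfolding I_def using s by (simp add: lpn_fin)
  have Ifin: "I < \<infinity>" using fin LK epow_less_top_iff[OF s0] by simp
  have "epow I (1/s) \<noteq> 0" using c0 cK LK by auto
  then have I0: "I \<noteq> 0" using epow_eq_0_iff[OF s0] by simp
  have sr: "(s - 1) * r = s"
  proof -
    have "1/r + 1/s = (s + r) / (r * s)" using r s by (simp add: field_simps)
    then have "(s + r) / (r * s) = 1" using rs by linarith
    then have "s + r = r * s" using r s by (simp add: divide_eq_eq)
    then show ?thesis by (simp add: algebra_simps)
  qed
  have Kg: "K y * g y = \<bar>K y\<bar> powr s" for y
  proof -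
    have "K y * g y = (K y * sgn (K y)) * \<bar>K y\<bar> powr (s - 1)" by (simp add: g_def)
    also have "\<dots> = \<bar>K y\<bar> * \<bar>K y\<bar> powr (s - 1)" by (simp add: abs_sgn)
    also have "\<dots> = \<bar>K y\<bar> powr s" by (subst powr_mult_base) auto
    finally show ?thesis .
  qed
  have gr: "\<bar>g y\<bar> powr r = \<bar>K y\<bar> powr s" for y
  proof (cases "K y = 0")
    case True then show ?thesis using r s by (simp add: g_def)
  next
    case False
    then have "\<bar>g y\<bar> = \<bar>K y\<bar> powr (s - 1)" by (simp add: g_def abs_mult)
    then show ?thesis by (simp add: powr_powr sr)
  qed
  have [measurable]: "g \<in> borel_measurable M" unfolding g_def by measurable
  have Lg: "lpn M (ennreal r) (\<lambda>y. ennreal \<bar>g y\<bar>) = epow I (1/r)"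
    using r by (simp add: lpn_fin gr I_def)
  have int: "integrable M (\<lambda>y. K y * g y)"
    unfolding Kg using Ifin unfolding I_def by (intro integrableI_bounded) auto
  define ia where "ia = (\<integral>y. K y * g y \<partial>M)"
  have Iia: "I = ennreal ia"
    unfolding I_def ia_def Kg by (rule nn_integral_eq_integral) (use int[unfolded Kg] in auto)
  have ia0: "ia > 0" using I0 Iia ennreal_eq_0_iff[of ia] by (metis not_less)
  show ?thesis
  proof (intro exI[of _ g] conjI)
    show "g \<in> borel_measurable M" by simp
    show "lpn M (ennreal r) (\<lambda>y. ennreal \<bar>g y\<bar>) < \<infinity>" using Lg Ifin epow_less_top_iff[OF r0] by simp
    show "integrable M (\<lambda>y. K y * g y)" by (fact int)
    show "0 < (\<integral>y. K y * g y \<partial>M)" using ia0 by (simp add: ia_def)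
    have "c * lpn M (ennreal r) (\<lambda>y. ennreal \<bar>g y\<bar>) \<le> epow I (1/s) * epow I (1/r)"
      unfolding Lg using cK LK by (intro mult_right_mono) auto
    also have "\<dots> = ennreal (ia powr (1/s) * ia powr (1/r))"
      using ia0 by (simp add: Iia epow_ennreal ennreal_mult)
    also have "ia powr (1/s) * ia powr (1/r) = ia"
      using ia0 rs by (simp add: powr_add[symmetric] add.commute)
    finally show "c * lpn M (ennreal r) (\<lambda>y. ennreal \<bar>g y\<bar>) \<le> ennreal (\<integral>y. K y * g y \<partial>M)"
      by (simp add: ia_def)
  qed
qed


lemma sharp_1inf:
  fixes K :: "'a \<Rightarrow> real"
  assumes fm: "finite_measure M" and [measurable]: "K \<in> borel_measurable M"
    and fin: "lpn M \<infinity> (\<lambda>y. ennreal \<bar>K y\<bar>) < \<infinity>"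
    and c0: "0 < c" and cK: "c < lpn M \<infinity> (\<lambda>y. ennreal \<bar>K y\<bar>)"
  shows "\<exists>g. g \<in> borel_measurable M \<and> lpn M 1 (\<lambda>y. ennreal \<bar>g y\<bar>) < \<infinity> \<and>
     integrable M (\<lambda>y. K y * g y) \<and> 0 < (\<integral>y. K y * g y \<partial>M) \<and>
     c * lpn M 1 (\<lambda>y. ennreal \<bar>g y\<bar>) \<le> ennreal (\<integral>y. K y * g y \<partial>M)"
proof -
  interpret finite_measure M by (fact fm)
  define L where "L = lpn M \<infinity> (\<lambda>y. ennreal \<bar>K y\<bar>)"
  define A where "A = {x \<in> space M. c < ennreal \<bar>K x\<bar>}"
  have A[measurable]: "A \<in> sets M" unfolding A_def by measurable
  have E: "enn2ereal c < esssup M (\<lambda>x. enn2ereal (ennreal \<bar>K x\<bar>))"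
  proof (rule ccontr)
    assume "\<not> ?thesis"
    then have "esssup M (\<lambda>x. enn2ereal (ennreal \<bar>K x\<bar>)) \<le> enn2ereal c" by simp
    then have "L \<le> c" unfolding L_def lpn_inf by (metis e2ennreal_enn2ereal e2ennreal_mono)
    then show False using cK L_def by simp
  qed
  have "emeasure M {x \<in> space M. enn2ereal c < enn2ereal (ennreal \<bar>K x\<bar>)} > 0"
    by (rule esssup_pos_measure[OF _ E]) measurable
  moreover have "{x \<in> space M. enn2ereal c < enn2ereal (ennreal \<bar>K x\<bar>)} = A"
    unfolding A_def by (auto simp: less_ennreal.rep_eq)
  ultimately have Apos: "emeasure M A > 0" by simp
  have Afin: "emeasure M A < \<infinity>" by (simp add: less_top[symmetric])
  define g where "g y = sgn (K y) * indicator A y" for y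
  have [measurable]: "g \<in> borel_measurable M" unfolding g_def by measurable
  have Kg: "K y * g y = \<bar>K y\<bar> * indicator A y" for y
    by (simp add: g_def abs_sgn)
  have Lfin: "L < \<infinity>" using fin unfolding L_def .
  have bnd: "AE y in M. norm (\<bar>K y\<bar> * indicator A y) \<le> enn2real L"
    using lpn_inf_AE[of "\<lambda>y. ennreal \<bar>K y\<bar>" M] unfolding L_def[symmetric]
  proof eventually_elim
    case (elim y)
    have "enn2real (ennreal \<bar>K y\<bar>) \<le> enn2real L" using elim Lfin by (intro enn2real_mono) (auto simp: less_top)
    then have "\<bar>K y\<bar> \<le> enn2real L" by simp
    then show ?case by (auto simp: indicator_def abs_mult)
  qed
  have int: "integrable M (\<lambda>y. K y * g y)"
    unfolding Kg by (rule integrable_const_bound[OF bnd]) measurable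
  have Ieq: "(\<integral>\<^sup>+ y. ennreal (K y * g y) \<partial>M) = ennreal (\<integral>y. K y * g y \<partial>M)"
    by (rule nn_integral_eq_integral[OF int]) (auto simp: Kg)
  have Lg: "lpn M 1 (\<lambda>y. ennreal \<bar>g y\<bar>) \<le> emeasure M A"
  proof -
    have "lpn M 1 (\<lambda>y. ennreal \<bar>g y\<bar>) = (\<integral>\<^sup>+ y. ennreal \<bar>g y\<bar> \<partial>M)" by (simp add: lpn_one)
    also have "\<dots> \<le> (\<integral>\<^sup>+ y. indicator A y \<partial>M)"
      by (intro nn_integral_mono) (auto simp: g_def indicator_def abs_mult)
    also have "\<dots> = emeasure M A" by simp
    finally show ?thesis .
  qed
  have key: "c * lpn M 1 (\<lambda>y. ennreal \<bar>g y\<bar>) \<le> (\<integral>\<^sup>+ y. ennreal (K y * g y) \<partial>M)"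
  proof -
    have "c * lpn M 1 (\<lambda>y. ennreal \<bar>g y\<bar>) = (\<integral>\<^sup>+ y. c * ennreal \<bar>g y\<bar> \<partial>M)"
      by (simp add: lpn_one nn_integral_cmult)
    also have "\<dots> \<le> (\<integral>\<^sup>+ y. ennreal (K y * g y) \<partial>M)"
    proof (intro nn_integral_mono)
      fix y assume "y \<in> space M"
      show "c * ennreal \<bar>g y\<bar> \<le> ennreal (K y * g y)"
      proof (cases "y \<in> A")
        case True
        then have cy: "c < ennreal \<bar>K y\<bar>" by (simp add: A_def)
        then have "K y \<noteq> 0" by (metis abs_zero ennreal_0 not_less_zero)
        have e1: "ennreal (K y * g y) = ennreal \<bar>K y\<bar>" using True by (simp add: Kg)
        have e2: "c * ennreal \<bar>g y\<bar> = c" using True \<open>K y \<noteq> 0\<close> by (simp add: g_def abs_mult)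
        show ?thesis unfolding e1 e2 using cy by (rule less_imp_le)
      next
        case False then show ?thesis by (simp add: g_def)
      qed
    qed
    finally show ?thesis .
  qed
  have pos: "0 < (\<integral>\<^sup>+ y. ennreal (K y * g y) \<partial>M)"
  proof -
    have "c * emeasure M A \<le> (\<integral>\<^sup>+ y. ennreal (K y * g y) \<partial>M)"
    proof -
      have "c * emeasure M A = (\<integral>\<^sup>+ y. c * indicator A y \<partial>M)" by (simp add: nn_integral_cmult)
      also have "\<dots> \<le> (\<integral>\<^sup>+ y. ennreal (K y * g y) \<partial>M)"
      proof (intro nn_integral_mono)
        fix y assume "y \<in> space M"
        show "c * indicator A y \<le> ennreal (K y * g y)"
          by (cases "y \<in> A") (auto simp: Kg A_def less_imp_le)
      qed
      finally show ?thesis .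
    qed
    moreover have "0 < c * emeasure M A" using c0 Apos by (simp add: ennreal_zero_less_mult_iff)
    ultimately show ?thesis by (rule less_le_trans[rotated])
  qed
  show ?thesis
  proof (intro exI[of _ g] conjI)
    show "g \<in> borel_measurable M" by simp
    show "lpn M 1 (\<lambda>y. ennreal \<bar>g y\<bar>) < \<infinity>" using Lg Afin by (rule le_less_trans)
    show "integrable M (\<lambda>y. K y * g y)" by (fact int)
    show "0 < (\<integral>y. K y * g y \<partial>M)" using pos Ieq by (simp add: ennreal_less_zero_iff)
    show "c * lpn M 1 (\<lambda>y. ennreal \<bar>g y\<bar>) \<le> ennreal (\<integral>y. K y * g y \<partial>M)"
      using key Ieq by simp
  qed
qed

lemma sharp:
  fixes K :: "'a \<Rightarrow> real" and p q :: ennreal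
  assumes fm: "finite_measure M" and [measurable]: "K \<in> borel_measurable M"
    and p1: "1 \<le> p" and q1: "1 \<le> q" and conj: "inverse p + inverse q = 1"
    and fin: "lpn M q (\<lambda>y. ennreal \<bar>K y\<bar>) < \<infinity>"
    and c0: "0 < c" and cK: "c < lpn M q (\<lambda>y. ennreal \<bar>K y\<bar>)"
  shows "\<exists>g. g \<in> borel_measurable M \<and> lpn M p (\<lambda>y. ennreal \<bar>g y\<bar>) < \<infinity> \<and>
     integrable M (\<lambda>y. K y * g y) \<and> 0 < (\<integral>y. K y * g y \<partial>M) \<and>
     c * lpn M p (\<lambda>y. ennreal \<bar>g y\<bar>) \<le> ennreal (\<integral>y. K y * g y \<partial>M)"
  using p1 q1 conj
proof (cases rule: conj_cases)
  case 1
  then show ?thesis using sharp_inf1[of K M c] fin c0 cK by simp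
next
  case 2
  then show ?thesis using sharp_1inf[OF fm, of K c] fin c0 cK by simp
next
  case (3 r s)
  then show ?thesis using sharp_fin[of K M r s c] fin c0 cK by simp
qed

lemma measurable_epow[measurable]:
  assumes h: "h \<in> borel_measurable M"
  shows "(\<lambda>x. epow (h x) s) \<in> borel_measurable M"
proof -
  have "h -` {\<infinity>} \<inter> space M \<in> sets M"
    by (rule measurable_sets[OF h]) (simp add: borel_closed)
  moreover have "{x \<in> space M. h x = \<infinity>} = h -` {\<infinity>} \<inter> space M" by auto
  ultimately have "{x \<in> space M. h x = \<infinity>} \<in> sets M" by simp
  then show ?thesis unfolding epow_def using h by (intro measurable_If) measurable
qed

lemma lpn_fin_iff:
  assumes "s \<ge> 1" shows "lpn M (ennreal s) h < \<infinity> \<longleftrightarrow> (\<integral>\<^sup>+ x. epow (h x) s \<partial>M) < \<infinity>"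
proof -
  have "1/s > 0" using assms by simp
  then show ?thesis unfolding lpn_def using assms by (simp add: epow_less_top_iff[OF \<open>1/s > 0\<close>, unfolded infinity_ennreal_def])
qed

lemma epow_mono: "a \<le> b \<Longrightarrow> s \<ge> 0 \<Longrightarrow> epow a s \<le> epow b s"
proof (cases "b = \<infinity>")
  case False
  assume ab: "a \<le> b" and s: "s \<ge> 0"
  then have "a \<noteq> \<infinity>" using False by (auto simp: top_unique)
  moreover have "enn2real a \<le> enn2real b" using ab False by (intro enn2real_mono) (auto simp: less_top)
  ultimately show ?thesis using False s by (auto simp: epow_def intro!: ennreal_leI powr_mono2)
qed (simp add: epow_def)

lemma real_add_powr_le:
  fixes x y s :: real
  assumes "x \<ge> 0" "y \<ge> 0" "s > 0"
  shows "(x + y) powr s \<le> 2 powr s * (x powr s + y powr s)"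
proof -
  have *: "(x + y) powr s \<le> 2 powr s * (x powr s + y powr s)" if "x \<le> y" "x \<ge> 0" "y \<ge> 0" for x y :: real
  proof -
    have "(x + y) powr s \<le> (2 * y) powr s" using that assms by (intro powr_mono2) auto
    also have "\<dots> = 2 powr s * y powr s" using that by (simp add: powr_mult)
    also have "\<dots> \<le> 2 powr s * (x powr s + y powr s)" by (intro mult_left_mono) auto
    finally show ?thesis .
  qed
  show ?thesis
  proof (cases "x \<le> y")
    case True then show ?thesis using * assms by blast
  next
    case False then show ?thesis using *[of y x] assms by (simp add: add.commute)
  qed
qed

lemma epow_add_le:
  assumes s: "s > 0"
  shows "epow (a + b) s \<le> ennreal (2 powr s) * (epow a s + epow b s)"
proof (cases "a = \<infinity> \<or> b = \<infinity>")
  case True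
  then have e: "epow a s + epow b s = \<infinity>" by (auto simp: epow_def)
  have "ennreal (2 powr s) * top = top" by (simp add: ennreal_mult_top)
  then show ?thesis by (simp add: e)
next
  case False
  then obtain x y where xy: "a = ennreal x" "b = ennreal y" "x \<ge> 0" "y \<ge> 0"
    by (metis a1)
  then have "epow (a + b) s = ennreal ((x + y) powr s)"
    by (simp add: ennreal_plus[symmetric] epow_ennreal del: ennreal_plus)
  also have "\<dots> \<le> ennreal (2 powr s * (x powr s + y powr s))"
    using xy s by (intro ennreal_leI real_add_powr_le) auto
  also have "\<dots> = ennreal (2 powr s) * (epow a s + epow b s)"
    using xy by (simp add: epow_ennreal ennreal_mult ennreal_plus)
  finally show ?thesis .
qed

lemma epow_cmult_le:
  assumes s: "s > 0" and c: "c \<ge> 0"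
  shows "epow (ennreal c * a) s \<le> ennreal (c powr s) * epow a s"
proof (cases "a = \<infinity>")
  case True
  show ?thesis
  proof (cases "c = 0")
    case True then show ?thesis using s by (simp add: epow_def)
  next
    case False
    then have "ennreal (c powr s) \<noteq> 0" using c by simp
    then show ?thesis using True by (simp add: epow_def ennreal_mult_top)
  qed
next
  case False
  then obtain x where x: "a = ennreal x" "x \<ge> 0" by (metis a1)
  then show ?thesis using c by (simp add: ennreal_mult[symmetric] epow_ennreal powr_mult)
qed

lemma lpn_inf_fin_iff:
  assumes "h \<in> borel_measurable M"
  shows "lpn M \<infinity> h < \<infinity> \<longleftrightarrow> (\<exists>C<\<infinity>. AE x in M. h x \<le> C)"
proof
  assume "lpn M \<infinity> h < \<infinity>" then show "\<exists>C<\<infinity>. AE x in M. h x \<le> C"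
    using lpn_inf_AE by blast
next
  assume "\<exists>C<\<infinity>. AE x in M. h x \<le> C"
  then obtain C where "C < \<infinity>" "AE x in M. h x \<le> C" by blast
  then show "lpn M \<infinity> h < \<infinity>" using lpn_inf_le[OF assms] by (blast intro: le_less_trans)
qed

lemma ennreal_ge1_cases:
  fixes q :: ennreal
  assumes "1 \<le> q"
  obtains "q = \<infinity>" | s where "q = ennreal s" "s \<ge> 1"
proof (cases "q = \<infinity>")
  case False
  then obtain s where "q = ennreal s" "s \<ge> 0" by (metis a1)
  then show ?thesis using that a2 assms by blast
qed

lemma lpn_mono_fin:
  assumes q: "1 \<le> q" and [measurable]: "h \<in> borel_measurable M"
    and le: "AE x in M. h x \<le> h' x" and fin: "lpn M q h' < \<infinity>"
  shows "lpn M q h < \<infinity>"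
  using q
proof (cases rule: ennreal_ge1_cases)
  case 1
  obtain C where C: "C < \<infinity>" "AE x in M. h' x \<le> C" using fin 1 lpn_inf_AE by blast
  have "AE x in M. h x \<le> C" using le C(2) by eventually_elim (auto elim: order_trans)
  then show ?thesis unfolding 1 lpn_inf_fin_iff[OF \<open>h \<in> borel_measurable M\<close>] using \<open>C < \<infinity>\<close> by blast
next
  case (2 s)
  have "(\<integral>\<^sup>+ x. epow (h x) s \<partial>M) \<le> (\<integral>\<^sup>+ x. epow (h' x) s \<partial>M)"
    using le 2 by (intro nn_integral_mono_AE) (auto elim!: eventually_mono intro: epow_mono)
  also have "\<dots> < \<infinity>" using fin 2 lpn_fin_iff by blast
  finally show ?thesis using 2 lpn_fin_iff by blast
qed

lemma lpn_add_fin: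
  assumes q: "1 \<le> q" and [measurable]: "h1 \<in> borel_measurable M" "h2 \<in> borel_measurable M"
    and f1: "lpn M q h1 < \<infinity>" and f2: "lpn M q h2 < \<infinity>"
  shows "lpn M q (\<lambda>x. h1 x + h2 x) < \<infinity>"
  using q
proof (cases rule: ennreal_ge1_cases)
  case 1
  obtain C1 where C1: "C1 < \<infinity>" "AE x in M. h1 x \<le> C1" using f1 1 lpn_inf_AE by blast
  obtain C2 where C2: "C2 < \<infinity>" "AE x in M. h2 x \<le> C2" using f2 1 lpn_inf_AE by blast
  have "AE x in M. h1 x + h2 x \<le> C1 + C2" using C1(2) C2(2) by eventually_elim (rule add_mono)
  moreover have "C1 + C2 < \<infinity>" using C1 C2 by simp
  moreover have "(\<lambda>x. h1 x + h2 x) \<in> borel_measurable M" by measurable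
  ultimately show ?thesis unfolding 1 using lpn_inf_fin_iff by blast
next
  case (2 s)
  have i1: "(\<integral>\<^sup>+ x. epow (h1 x) s \<partial>M) < \<infinity>" using f1 2 lpn_fin_iff by blast
  have i2: "(\<integral>\<^sup>+ x. epow (h2 x) s \<partial>M) < \<infinity>" using f2 2 lpn_fin_iff by blast
  have "(\<integral>\<^sup>+ x. epow (h1 x + h2 x) s \<partial>M) \<le> (\<integral>\<^sup>+ x. ennreal (2 powr s) * (epow (h1 x) s + epow (h2 x) s) \<partial>M)"
    using 2 by (intro nn_integral_mono epow_add_le) auto
  also have "\<dots> = ennreal (2 powr s) * ((\<integral>\<^sup>+ x. epow (h1 x) s \<partial>M) + (\<integral>\<^sup>+ x. epow (h2 x) s \<partial>M))"
    by (simp add: nn_integral_cmult nn_integral_add)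
  also have "\<dots> < \<infinity>" using i1 i2 by (simp add: ennreal_mult_less_top)
  finally show ?thesis using 2 lpn_fin_iff by blast
qed

lemma lpn_cmult_fin:
  assumes q: "1 \<le> q" and [measurable]: "h \<in> borel_measurable M" and c: "c \<ge> 0"
    and f: "lpn M q h < \<infinity>"
  shows "lpn M q (\<lambda>x. ennreal c * h x) < \<infinity>"
  using q
proof (cases rule: ennreal_ge1_cases)
  case 1
  obtain C where C: "C < \<infinity>" "AE x in M. h x \<le> C" using f 1 lpn_inf_AE by blast
  have "AE x in M. ennreal c * h x \<le> ennreal c * C" using C(2) by eventually_elim (rule mult_left_mono, auto)
  moreover have "ennreal c * C < \<infinity>" using C by (simp add: ennreal_mult_less_top)
  moreover have "(\<lambda>x. ennreal c * h x) \<in> borel_measurable M" by measurable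
  ultimately show ?thesis unfolding 1 using lpn_inf_fin_iff by blast
next
  case (2 s)
  have i: "(\<integral>\<^sup>+ x. epow (h x) s \<partial>M) < \<infinity>" using f 2 lpn_fin_iff by blast
  have "(\<integral>\<^sup>+ x. epow (ennreal c * h x) s \<partial>M) \<le> (\<integral>\<^sup>+ x. ennreal (c powr s) * epow (h x) s \<partial>M)"
    using 2 c by (intro nn_integral_mono epow_cmult_le) auto
  also have "\<dots> = ennreal (c powr s) * (\<integral>\<^sup>+ x. epow (h x) s \<partial>M)"
    by (simp add: nn_integral_cmult)
  also have "\<dots> < \<infinity>" using i by (simp add: ennreal_mult_less_top)
  finally show ?thesis using 2 lpn_fin_iff by blast
qed

lemma lpn_zero_fin:
  assumes q: "1 \<le> q"
  shows "lpn M q (\<lambda>x. 0) < \<infinity>"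
  using q
proof (cases rule: ennreal_ge1_cases)
  case 1
  have "AE x in M. (0::ennreal) \<le> 0" by simp
  moreover have "(0::ennreal) < \<infinity>" by simp
  ultimately have "\<exists>C<\<infinity>. AE x in M. (0::ennreal) \<le> C" by blast
  then show ?thesis unfolding 1 using lpn_inf_fin_iff[of "\<lambda>x. 0::ennreal" M] by simp
next
  case (2 s) then show ?thesis using lpn_fin_iff[of s M "\<lambda>x. 0"] by (simp add: epow_def)
qed

lemma lpn_sum_fin:
  assumes q: "1 \<le> q" and I: "finite I"
    and [measurable]: "\<And>i. i \<in> I \<Longrightarrow> h i \<in> borel_measurable M"
    and f: "\<And>i. i \<in> I \<Longrightarrow> lpn M q (h i) < \<infinity>"
  shows "lpn M q (\<lambda>x. \<Sum>i\<in>I. h i x) < \<infinity>"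
  using I assms
proof (induction I rule: finite_induct)
  case empty then show ?case using lpn_zero_fin[OF q] by simp
next
  case (insert i I)
  have m: "(\<lambda>x. \<Sum>i\<in>I. h i x) \<in> borel_measurable M" using insert by measurable
  have "lpn M q (\<lambda>x. h i x + (\<Sum>i\<in>I. h i x)) < \<infinity>"
    by (rule lpn_add_fin[OF q _ m]) (use insert in auto)
  then show ?case using insert by simp
qed

lemma lpn_fin_AE:
  assumes q: "1 \<le> q" and [measurable]: "h \<in> borel_measurable M" and f: "lpn M q h < \<infinity>"
  shows "AE x in M. h x < \<infinity>"
  using q
proof (cases rule: ennreal_ge1_cases)
  case 1
  obtain C where C: "C < \<infinity>" "AE x in M. h x \<le> C" using f 1 lpn_inf_AE by blast
  show ?thesis using C(2) by eventually_elim (use C(1) in \<open>auto intro: le_less_trans\<close>)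
next
  case (2 s)
  have i: "(\<integral>\<^sup>+ x. epow (h x) s \<partial>M) < \<infinity>" using f 2 lpn_fin_iff by blast
  have "AE x in M. epow (h x) s \<noteq> \<infinity>"
    by (rule nn_integral_PInf_AE) (use i in auto)
  then show ?thesis
    by eventually_elim (auto simp: epow_def less_top[symmetric])
qed

locale L2 =
  fixes M :: "'a measure" and N :: nat and X :: "nat \<Rightarrow> 'a set" and \<omega> :: "nat \<Rightarrow> real"
    and xs :: "nat \<Rightarrow> 'a" and p q :: ennreal and \<Phi> :: "'a \<Rightarrow> 'a \<Rightarrow> real"
  assumes sets: "\<And>j. j < N \<Longrightarrow> X j \<in> sets M"
    and disj: "disjoint_family_on X {..<N}"
    and union: "(\<Union>j<N. X j) = space M"
    and meas: "\<And>j. j < N \<Longrightarrow> emeasure M (X j) = ennreal (\<omega> j)"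
    and wpos: "\<And>j. j < N \<Longrightarrow> \<omega> j > 0"
    and nodes: "\<And>j. j < N \<Longrightarrow> xs j \<in> X j"
    and p1: "1 \<le> p" and q1: "1 \<le> q" and conj: "inverse p + inverse q = 1"
    and \<Phi>_meas: "(\<lambda>(x, y). \<Phi> x y) \<in> borel_measurable (M \<Otimes>\<^sub>M M)"
    and \<Phi>_row: "\<forall>x\<in>space M. lpn M q (\<lambda>y. ennreal \<bar>\<Phi> x y\<bar>) < \<infinity>"
    and \<Phi>_col: "lpn M q (\<lambda>y. \<integral>\<^sup>+ x. ennreal \<bar>\<Phi> x y\<bar> \<partial>M) < \<infinity>"
begin

lemma fm: "finite_measure M"
proof (rule finite_measureI)
  have "emeasure M (space M) = emeasure M (\<Union>j<N. X j)" by (simp add: union)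
  also have "\<dots> \<le> (\<Sum>j<N. emeasure M (X j))"
    using sets by (intro emeasure_subadditive_finite) auto
  also have "\<dots> = (\<Sum>j<N. ennreal (\<omega> j))" using meas by simp
  also have "\<dots> < \<infinity>" by (simp add: less_top[symmetric])
  finally show "emeasure M (space M) \<noteq> \<infinity>" by simp
qed

sublocale finite_measure M by (rule fm)

sublocale P: pair_sigma_finite M M by intro_locales

lemma xs_space: "j < N \<Longrightarrow> xs j \<in> space M"
  using nodes union by blast

lemma \<Phi>m[measurable]: "(\<lambda>z. \<Phi> (fst z) (snd z)) \<in> borel_measurable (M \<Otimes>\<^sub>M M)"
  using \<Phi>_meas by (simp add: case_prod_beta')

lemma \<Phi>sw[measurable]: "(\<lambda>z. \<Phi> (snd z) (fst z)) \<in> borel_measurable (M \<Otimes>\<^sub>M M)"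
proof -
  have "(\<lambda>z. (snd z, fst z)) \<in> measurable (M \<Otimes>\<^sub>M M) (M \<Otimes>\<^sub>M M)" by measurable
  from measurable_compose[OF this \<Phi>m] show ?thesis by simp
qed

lemma \<Phi>x[measurable]: "x \<in> space M \<Longrightarrow> \<Phi> x \<in> borel_measurable M"
proof -
  assume x: "x \<in> space M"
  have "(\<lambda>y. (x, y)) \<in> measurable M (M \<Otimes>\<^sub>M M)" using x by measurable
  from measurable_compose[OF this \<Phi>m] show ?thesis by simp
qed

lemma \<Phi>y: "y \<in> space M \<Longrightarrow> (\<lambda>x. \<Phi> x y) \<in> borel_measurable M"
proof -
  assume y: "y \<in> space M"
  have "(\<lambda>x. (x, y)) \<in> measurable M (M \<Otimes>\<^sub>M M)" using y by measurable
  from measurable_compose[OF this \<Phi>m] show ?thesis by simp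
qed

definition col where "col y = (\<integral>\<^sup>+ x. ennreal \<bar>\<Phi> x y\<bar> \<partial>M)"

lemma col_meas[measurable]: "col \<in> borel_measurable M"
  unfolding col_def by measurable

definition K where "K y = (\<Sum>j<N. (LINT x:X j|M. (\<Phi> (xs j) y - \<Phi> x y)))"

lemma K_meas[measurable]: "K \<in> borel_measurable M"
proof -
  have [measurable]: "X j \<in> sets M" if "j < N" for j using sets that .
  have "(\<lambda>y. LINT x:X j|M. (\<Phi> (xs j) y - \<Phi> x y)) \<in> borel_measurable M" if j: "j < N" for j
  proof -
    have [measurable]: "\<Phi> (xs j) \<in> borel_measurable M" using xs_space[OF j] by simp
    have [measurable]: "X j \<in> sets M" using sets j .
    show ?thesis unfolding set_lebesgue_integral_def by measurable
  qed
  then show ?thesis unfolding K_def by (intro borel_measurable_sum) auto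
qed

lemma col_fin: "AE y in M. col y < \<infinity>"
  by (rule lpn_fin_AE[OF q1 col_meas]) (use \<Phi>_col in \<open>simp add: col_def[abs_def]\<close>)

lemma col_int: "AE y in M. integrable M (\<lambda>x. \<Phi> x y)"
  using col_fin AE_space
proof eventually_elim
  case (elim y)
  show ?case using \<Phi>y[OF elim(2)] elim(1) by (intro integrableI_bounded) (auto simp: col_def)
qed

lemma LINT_bound:
  assumes j: "j < N" and y: "y \<in> space M"
  shows "ennreal \<bar>LINT x:X j|M. (\<Phi> (xs j) y - \<Phi> x y)\<bar> \<le> ennreal (\<omega> j) * ennreal \<bar>\<Phi> (xs j) y\<bar> + col y"
proof -
  have [measurable]: "X j \<in> sets M" using sets j .
  have [measurable]: "(\<lambda>x. \<Phi> x y) \<in> borel_measurable M" using \<Phi>y[OF y] .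
  define F where "F x = indicator (X j) x * (\<Phi> (xs j) y - \<Phi> x y)" for x
  have L: "(LINT x:X j|M. (\<Phi> (xs j) y - \<Phi> x y)) = (\<integral>x. F x \<partial>M)"
    by (simp add: set_lebesgue_integral_def F_def)
  have "ennreal \<bar>\<integral>x. F x \<partial>M\<bar> \<le> (\<integral>\<^sup>+ x. ennreal \<bar>F x\<bar> \<partial>M)"
  proof (cases "integrable M F")
    case True
    then show ?thesis using integral_norm_bound_ennreal[OF True] by simp
  next
    case False
    then show ?thesis by (simp add: not_integrable_integral_eq)
  qed
  also have "\<dots> \<le> (\<integral>\<^sup>+ x. indicator (X j) x * ennreal \<bar>\<Phi> (xs j) y\<bar> + ennreal \<bar>\<Phi> x y\<bar> \<partial>M)"
  proof (intro nn_integral_mono)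
    fix x
    show "ennreal \<bar>F x\<bar> \<le> indicator (X j) x * ennreal \<bar>\<Phi> (xs j) y\<bar> + ennreal \<bar>\<Phi> x y\<bar>"
    proof (cases "x \<in> X j")
      case True
      then have "ennreal \<bar>F x\<bar> \<le> ennreal (\<bar>\<Phi> (xs j) y\<bar> + \<bar>\<Phi> x y\<bar>)"
        by (intro ennreal_leI) (simp add: F_def abs_triangle_ineq4)
      then show ?thesis using True by (simp add: ennreal_plus)
    next
      case False then show ?thesis by (simp add: F_def)
    qed
  qed
  also have "\<dots> = (\<integral>\<^sup>+ x. indicator (X j) x * ennreal \<bar>\<Phi> (xs j) y\<bar> \<partial>M) + col y"
    unfolding col_def by (rule nn_integral_add) auto
  also have "(\<integral>\<^sup>+ x. indicator (X j) x * ennreal \<bar>\<Phi> (xs j) y\<bar> \<partial>M) = ennreal (\<omega> j) * ennreal \<bar>\<Phi> (xs j) y\<bar>"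
    using meas[OF j] by (simp add: nn_integral_multc)
  finally show ?thesis unfolding L .
qed

lemma K_bound:
  assumes y: "y \<in> space M"
  shows "ennreal \<bar>K y\<bar> \<le> (\<Sum>j<N. ennreal (\<omega> j) * ennreal \<bar>\<Phi> (xs j) y\<bar> + col y)"
proof -
  have "ennreal \<bar>K y\<bar> \<le> ennreal (\<Sum>j<N. \<bar>LINT x:X j|M. (\<Phi> (xs j) y - \<Phi> x y)\<bar>)"
    unfolding K_def by (intro ennreal_leI sum_abs)
  also have "\<dots> = (\<Sum>j<N. ennreal \<bar>LINT x:X j|M. (\<Phi> (xs j) y - \<Phi> x y)\<bar>)"
    by (simp add: sum_ennreal)
  also have "\<dots> \<le> (\<Sum>j<N. ennreal (\<omega> j) * ennreal \<bar>\<Phi> (xs j) y\<bar> + col y)"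
    using LINT_bound y by (intro sum_mono) auto
  finally show ?thesis .
qed

lemma K_fin: "lpn M q (\<lambda>y. ennreal \<bar>K y\<bar>) < \<infinity>"
proof (rule lpn_mono_fin[OF q1])
  show "(\<lambda>y. ennreal \<bar>K y\<bar>) \<in> borel_measurable M" by measurable
  show "AE y in M. ennreal \<bar>K y\<bar> \<le> (\<Sum>j<N. ennreal (\<omega> j) * ennreal \<bar>\<Phi> (xs j) y\<bar> + col y)"
    using K_bound by (auto intro!: AE_I2)
  show "lpn M q (\<lambda>y. \<Sum>j<N. ennreal (\<omega> j) * ennreal \<bar>\<Phi> (xs j) y\<bar> + col y) < \<infinity>"
  proof (rule lpn_sum_fin[OF q1])
    fix j assume "j \<in> {..<N}"
    then have j: "j < N" by simp
    have [measurable]: "\<Phi> (xs j) \<in> borel_measurable M" using xs_space[OF j] by simp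
    show "(\<lambda>y. ennreal (\<omega> j) * ennreal \<bar>\<Phi> (xs j) y\<bar> + col y) \<in> borel_measurable M" by measurable
    have r: "lpn M q (\<lambda>y. ennreal \<bar>\<Phi> (xs j) y\<bar>) < \<infinity>" using \<Phi>_row xs_space[OF j] by blast
    show "lpn M q (\<lambda>y. ennreal (\<omega> j) * ennreal \<bar>\<Phi> (xs j) y\<bar> + col y) < \<infinity>"
    proof (rule lpn_add_fin[OF q1])
      show "lpn M q (\<lambda>y. ennreal (\<omega> j) * ennreal \<bar>\<Phi> (xs j) y\<bar>) < \<infinity>"
        using wpos[OF j] by (intro lpn_cmult_fin[OF q1 _ _ r]) auto
      show "lpn M q col < \<infinity>" using \<Phi>_col by (simp add: col_def[abs_def])
    qed auto
  qed auto
qed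

lemma conj': "inverse q + inverse p = 1" using conj by (simp add: add.commute)

lemma row_int:
  assumes [measurable]: "g \<in> borel_measurable M" and gf: "lpn M p (\<lambda>y. ennreal \<bar>g y\<bar>) < \<infinity>"
    and x: "x \<in> space M"
  shows "integrable M (\<lambda>y. \<Phi> x y * g y)"
proof (rule integrableI_bounded)
  have [measurable]: "\<Phi> x \<in> borel_measurable M" using x by simp
  show "(\<lambda>y. \<Phi> x y * g y) \<in> borel_measurable M" by measurable
  have "(\<integral>\<^sup>+ y. ennreal \<bar>\<Phi> x y * g y\<bar> \<partial>M) \<le> lpn M q (\<lambda>y. ennreal \<bar>\<Phi> x y\<bar>) * lpn M p (\<lambda>y. ennreal \<bar>g y\<bar>)"
    by (rule holder[OF _ _ q1 p1 conj']) auto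
  also have "\<dots> < \<infinity>" using \<Phi>_row x gf by (simp add: ennreal_mult_less_top)
  finally show "(\<integral>\<^sup>+ y. ennreal (norm (\<Phi> x y * g y)) \<partial>M) < \<infinity>" by simp
qed

lemma prod_int:
  assumes [measurable]: "g \<in> borel_measurable M" and gf: "lpn M p (\<lambda>y. ennreal \<bar>g y\<bar>) < \<infinity>"
  shows "integrable (M \<Otimes>\<^sub>M M) (\<lambda>(x, y). \<Phi> x y * g y)"
proof (rule integrableI_bounded)
  show m: "(\<lambda>(x, y). \<Phi> x y * g y) \<in> borel_measurable (M \<Otimes>\<^sub>M M)"
    unfolding case_prod_beta' by measurable
  define cr where "cr y = enn2real (col y)" for y
  have [measurable]: "cr \<in> borel_measurable M" unfolding cr_def by measurable
  have "(\<integral>\<^sup>+ z. ennreal (norm ((\<lambda>(x, y). \<Phi> x y * g y) z)) \<partial>(M \<Otimes>\<^sub>M M))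
      = (\<integral>\<^sup>+ y. (\<integral>\<^sup>+ x. ennreal \<bar>\<Phi> x y * g y\<bar> \<partial>M) \<partial>M)"
    by (subst P.nn_integral_snd[symmetric]) (use m in \<open>auto simp: case_prod_beta'\<close>)
  also have "\<dots> = (\<integral>\<^sup>+ y. col y * ennreal \<bar>g y\<bar> \<partial>M)"
  proof (intro nn_integral_cong)
    fix y assume y: "y \<in> space M"
    have [measurable]: "(\<lambda>x. \<Phi> x y) \<in> borel_measurable M" using \<Phi>y[OF y] .
    show "(\<integral>\<^sup>+ x. ennreal \<bar>\<Phi> x y * g y\<bar> \<partial>M) = col y * ennreal \<bar>g y\<bar>"
      unfolding col_def by (simp add: abs_mult ennreal_mult nn_integral_multc)
  qed
  also have "\<dots> = (\<integral>\<^sup>+ y. ennreal \<bar>cr y * g y\<bar> \<partial>M)"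
    using col_fin
    by (intro nn_integral_cong_AE, eventually_elim) (auto simp: cr_def abs_mult ennreal_mult)
  also have "\<dots> \<le> lpn M q (\<lambda>y. ennreal \<bar>cr y\<bar>) * lpn M p (\<lambda>y. ennreal \<bar>g y\<bar>)"
    by (rule holder[OF _ _ q1 p1 conj']) auto
  also have "\<dots> < \<infinity>"
  proof -
    have "lpn M q (\<lambda>y. ennreal \<bar>cr y\<bar>) < \<infinity>"
    proof (rule lpn_mono_fin[OF q1 _ _ \<Phi>_col])
      show "AE x in M. ennreal \<bar>cr x\<bar> \<le> (\<integral>\<^sup>+ xa. ennreal \<bar>\<Phi> xa x\<bar> \<partial>M)"
        by (auto simp: cr_def col_def[symmetric] ennreal_enn2real_if)
    qed measurable
    then show ?thesis using gf by (simp add: ennreal_mult_less_top)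
  qed
  finally show "(\<integral>\<^sup>+ z. ennreal (norm ((\<lambda>(x, y). \<Phi> x y * g y) z)) \<partial>(M \<Otimes>\<^sub>M M)) < \<infinity>" .
qed

lemma ind_sum:
  assumes x: "x \<in> space M"
  shows "(\<Sum>j<N. indicator (X j) x) = (1::real)"
proof -
  obtain j0 where j0: "j0 < N" "x \<in> X j0" using x union by blast
  have "\<And>j. j < N \<Longrightarrow> j \<noteq> j0 \<Longrightarrow> x \<notin> X j"
    using disj j0 unfolding disjoint_family_on_def by blast
  then have "(\<Sum>j<N. indicator (X j) x) = (\<Sum>j<N. if j = j0 then 1 else (0::real))"
    using j0 by (intro sum.cong) (auto simp: indicator_def)
  also have "\<dots> = 1" using j0 by simp
  finally show ?thesis .
qed

lemma K_eq:
  assumes y: "y \<in> space M" and iy: "integrable M (\<lambda>x. \<Phi> x y)"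
  shows "K y = (\<Sum>j<N. \<omega> j * \<Phi> (xs j) y) - (\<integral>x. \<Phi> x y \<partial>M)"
proof -
  have mX: "\<And>j. j < N \<Longrightarrow> measure M (X j) = \<omega> j"
    using meas wpos by (intro measure_eq_emeasure_eq_ennreal) (auto simp: less_imp_le)
  have intj: "integrable M (\<lambda>x. indicator (X j) x * \<Phi> x y)" if "j < N" for j
    using integrable_mult_indicator[OF sets[OF that] iy] by simp
  have intc: "integrable M (\<lambda>x. indicator (X j) x * \<Phi> (xs j) y)" if "j < N" for j
    using integrable_mult_indicator[OF sets[OF that] integrable_const[of "\<Phi> (xs j) y"]] by simp
  have "K y = (\<Sum>j<N. \<omega> j * \<Phi> (xs j) y - (\<integral>x. indicator (X j) x * \<Phi> x y \<partial>M))"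
    unfolding K_def
  proof (intro sum.cong refl)
    fix j assume "j \<in> {..<N}"
    then have j: "j < N" by simp
    have "(LINT x:X j|M. (\<Phi> (xs j) y - \<Phi> x y))
        = (\<integral>x. indicator (X j) x * \<Phi> (xs j) y - indicator (X j) x * \<Phi> x y \<partial>M)"
      unfolding set_lebesgue_integral_def by (simp add: right_diff_distrib)
    also have "\<dots> = (\<integral>x. indicator (X j) x * \<Phi> (xs j) y \<partial>M) - (\<integral>x. indicator (X j) x * \<Phi> x y \<partial>M)"
      by (rule Bochner_Integration.integral_diff[OF intc[OF j] intj[OF j]])
    also have "(\<integral>x. indicator (X j) x * \<Phi> (xs j) y \<partial>M) = \<omega> j * \<Phi> (xs j) y"
      using sets[OF j] mX[OF j] by simp
    finally show "(LINT x:X j|M. (\<Phi> (xs j) y - \<Phi> x y)) = \<omega> j * \<Phi> (xs j) y - (\<integral>x. indicator (X j) x * \<Phi> x y \<partial>M)" .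
  qed
  also have "\<dots> = (\<Sum>j<N. \<omega> j * \<Phi> (xs j) y) - (\<Sum>j<N. (\<integral>x. indicator (X j) x * \<Phi> x y \<partial>M))"
    by (simp add: sum_subtractf)
  also have "(\<Sum>j<N. (\<integral>x. indicator (X j) x * \<Phi> x y \<partial>M)) = (\<integral>x. (\<Sum>j<N. indicator (X j) x * \<Phi> x y) \<partial>M)"
    by (rule Bochner_Integration.integral_sum[symmetric]) (use intj in auto)
  also have "\<dots> = (\<integral>x. \<Phi> x y \<partial>M)"
    by (rule Bochner_Integration.integral_cong[OF refl]) (simp add: sum_distrib_right[symmetric] ind_sum)
  finally show ?thesis .
qed

lemma E_eq:
  assumes [measurable]: "g \<in> borel_measurable M" and gf: "lpn M p (\<lambda>y. ennreal \<bar>g y\<bar>) < \<infinity>"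
  shows "integrable M (\<lambda>y. K y * g y)"
    and "quad_err M N xs \<omega> (\<lambda>x. \<integral>y. \<Phi> x y * g y \<partial>M) = (\<integral>y. K y * g y \<partial>M)"
proof -
  have PI: "integrable (M \<Otimes>\<^sub>M M) (\<lambda>(x, y). \<Phi> x y * g y)" by (rule prod_int[OF _ gf]) simp
  define S where "S y = (\<Sum>j<N. \<omega> j * \<Phi> (xs j) y)" for y
  define C where "C y = (\<integral>x. \<Phi> x y \<partial>M)" for y
  have [measurable]: "\<Phi> (xs j) \<in> borel_measurable M" if "j < N" for j using xs_space[OF that] by simp
  have Sm[measurable]: "S \<in> borel_measurable M" unfolding S_def by measurable
  have Cm[measurable]: "C \<in> borel_measurable M" unfolding C_def by measurable
  have rowj: "integrable M (\<lambda>y. \<Phi> (xs j) y * g y)" if "j < N" for j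
    by (rule row_int[OF _ gf xs_space[OF that]]) simp
  have intS: "integrable M (\<lambda>y. S y * g y)"
  proof -
    have "integrable M (\<lambda>y. \<Sum>j<N. \<omega> j * (\<Phi> (xs j) y * g y))"
      by (intro Bochner_Integration.integrable_sum) (use rowj in auto)
    then show ?thesis by (simp add: S_def sum_distrib_right mult.assoc)
  qed
  have intC: "integrable M (\<lambda>y. C y * g y)"
  proof -
    have "integrable M (\<lambda>y. \<integral>x. \<Phi> x y * g y \<partial>M)" using P.integrable_snd[OF PI] .
    then show ?thesis by (simp add: C_def)
  qed
  have int1: "(\<integral>x. (\<integral>y. \<Phi> x y * g y \<partial>M) \<partial>M) = (\<integral>y. C y * g y \<partial>M)"
    using P.Fubini_integral[OF PI] by (simp add: C_def)
  have sum1: "(\<Sum>j<N. \<omega> j * (\<integral>y. \<Phi> (xs j) y * g y \<partial>M)) = (\<integral>y. S y * g y \<partial>M)"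
  proof -
    have "(\<Sum>j<N. \<omega> j * (\<integral>y. \<Phi> (xs j) y * g y \<partial>M)) = (\<Sum>j<N. (\<integral>y. \<omega> j * (\<Phi> (xs j) y * g y) \<partial>M))"
      by simp
    also have "\<dots> = (\<integral>y. (\<Sum>j<N. \<omega> j * (\<Phi> (xs j) y * g y)) \<partial>M)"
      by (rule Bochner_Integration.integral_sum[symmetric]) (use rowj in auto)
    also have "\<dots> = (\<integral>y. S y * g y \<partial>M)"
      by (simp add: S_def sum_distrib_right mult.assoc)
    finally show ?thesis .
  qed
  have AEK: "AE y in M. (S y - C y) * g y = K y * g y"
    using col_int AE_space
  proof eventually_elim
    case (elim y)
    show ?case using K_eq[OF elim(2) elim(1)] by (simp add: S_def C_def)
  qed
  have intSC: "integrable M (\<lambda>y. (S y - C y) * g y)"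
    using Bochner_Integration.integrable_diff[OF intS intC] by (simp add: left_diff_distrib)
  show "integrable M (\<lambda>y. K y * g y)"
    using integrable_cong_AE[of "\<lambda>y. (S y - C y) * g y" M "\<lambda>y. K y * g y"] AEK intSC by simp
  have "quad_err M N xs \<omega> (\<lambda>x. \<integral>y. \<Phi> x y * g y \<partial>M) = (\<integral>y. S y * g y \<partial>M) - (\<integral>y. C y * g y \<partial>M)"
    unfolding quad_err_def sum1 int1 ..
  also have "\<dots> = (\<integral>y. (S y - C y) * g y \<partial>M)"
    using Bochner_Integration.integral_diff[OF intS intC] by (simp add: left_diff_distrib)
  also have "\<dots> = (\<integral>y. K y * g y \<partial>M)"
    by (rule integral_cong_AE[OF _ _ AEK]) auto
  finally show "quad_err M N xs \<omega> (\<lambda>x. \<integral>y. \<Phi> x y * g y \<partial>M) = (\<integral>y. K y * g y \<partial>M)" .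
qed

abbreviation "Lq \<equiv> lpn M q (\<lambda>y. ennreal \<bar>K y\<bar>)"

lemma pot_props:
  assumes P: "is_potential M p \<Phi> g f"
  shows "integrable M f" and "quad_err M N xs \<omega> f = (\<integral>y. K y * g y \<partial>M)"
    and "ennreal \<bar>quad_err M N xs \<omega> f\<bar> \<le> Lq * lpn M p (\<lambda>y. ennreal \<bar>g y\<bar>)"
proof -
  have gm[measurable]: "g \<in> borel_measurable M" and gf: "lpn M p (\<lambda>y. ennreal \<bar>g y\<bar>) < \<infinity>"
    and fx: "\<And>x. x \<in> space M \<Longrightarrow> f x = (\<integral>y. \<Phi> x y * g y \<partial>M)"
    using P unfolding is_potential_def by auto
  have "integrable M (\<lambda>x. \<integral>y. \<Phi> x y * g y \<partial>M)"
    using P.integrable_fst[OF prod_int[OF gm gf]] by simp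
  then show "integrable M f"
    using fx by (subst Bochner_Integration.integrable_cong[OF refl]) auto
  have "quad_err M N xs \<omega> f = quad_err M N xs \<omega> (\<lambda>x. \<integral>y. \<Phi> x y * g y \<partial>M)"
    unfolding quad_err_def
  proof (intro arg_cong2[where f="(-)"] sum.cong refl)
    fix j assume "j \<in> {..<N}"
    then show "\<omega> j * f (xs j) = \<omega> j * (\<integral>y. \<Phi> (xs j) y * g y \<partial>M)" using fx xs_space by simp
  next
    show "(\<integral>x. f x \<partial>M) = (\<integral>x. (\<integral>y. \<Phi> x y * g y \<partial>M) \<partial>M)"
      by (rule Bochner_Integration.integral_cong[OF refl]) (use fx in auto)
  qed
  also have "\<dots> = (\<integral>y. K y * g y \<partial>M)" by (rule E_eq(2)[OF gm gf])
  finally show QE: "quad_err M N xs \<omega> f = (\<integral>y. K y * g y \<partial>M)" .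
  have "ennreal \<bar>\<integral>y. K y * g y \<partial>M\<bar> \<le> (\<integral>\<^sup>+ y. ennreal (norm (K y * g y)) \<partial>M)"
    using integral_norm_bound_ennreal[OF E_eq(1)[OF gm gf]] by simp
  also have "\<dots> \<le> Lq * lpn M p (\<lambda>y. ennreal \<bar>g y\<bar>)"
    using holder[OF K_meas gm q1 p1 conj'] by simp
  finally show "ennreal \<bar>quad_err M N xs \<omega> f\<bar> \<le> Lq * lpn M p (\<lambda>y. ennreal \<bar>g y\<bar>)"
    unfolding QE .
qed

lemma H_le: "is_potential M p \<Phi> g f \<Longrightarrow> H_norm M p \<Phi> f \<le> lpn M p (\<lambda>y. ennreal \<bar>g y\<bar>)"
  unfolding H_norm_def by (rule INF_lower) simp

lemma upper:
  assumes "in_H M p \<Phi> f"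
  shows "ennreal \<bar>quad_err M N xs \<omega> f\<bar> \<le> Lq * H_norm M p \<Phi> f"
proof (cases "Lq = 0")
  case True
  obtain g where g: "is_potential M p \<Phi> g f" using assms unfolding in_H_def by blast
  have "ennreal \<bar>quad_err M N xs \<omega> f\<bar> \<le> 0" using pot_props(3)[OF g] True by simp
  then show ?thesis by simp
next
  case False
  have Lfin: "Lq < top" using K_fin by simp
  have "ennreal \<bar>quad_err M N xs \<omega> f\<bar> / Lq \<le> H_norm M p \<Phi> f"
    unfolding H_norm_def
  proof (rule INF_greatest)
    fix g assume "g \<in> {g. is_potential M p \<Phi> g f}"
    then have g: "is_potential M p \<Phi> g f" by simp
    show "ennreal \<bar>quad_err M N xs \<omega> f\<bar> / Lq \<le> lpn M p (\<lambda>y. ennreal \<bar>g y\<bar>)"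
      using False pot_props(3)[OF g] by (intro divide_le_posI_ennreal) (auto simp: zero_less_iff_neq_zero)
  qed
  then have "ennreal \<bar>quad_err M N xs \<omega> f\<bar> / Lq * Lq \<le> H_norm M p \<Phi> f * Lq"
    by (rule mult_right_mono) simp
  moreover have "ennreal \<bar>quad_err M N xs \<omega> f\<bar> / Lq * Lq = ennreal \<bar>quad_err M N xs \<omega> f\<bar>"
    using False Lfin by (simp add: ennreal_divide_times)
  ultimately show ?thesis by (simp add: mult.commute)
qed

lemma err_le: "err_norm M p \<Phi> N xs \<omega> \<le> Lq"
  unfolding err_norm_def
proof (rule SUP_least)
  fix f assume "f \<in> {f. in_H M p \<Phi> f \<and> H_norm M p \<Phi> f \<noteq> 0}"
  then have f: "in_H M p \<Phi> f" and H0: "H_norm M p \<Phi> f \<noteq> 0" by auto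
  show "ennreal \<bar>quad_err M N xs \<omega> f\<bar> / H_norm M p \<Phi> f \<le> Lq"
    using upper[OF f] H0 by (intro divide_le_posI_ennreal) (auto simp: zero_less_iff_neq_zero mult.commute)
qed

lemma err_ge: "Lq \<le> err_norm M p \<Phi> N xs \<omega>"
proof (rule dense_le)
  fix c assume cK: "c < Lq"
  show "c \<le> err_norm M p \<Phi> N xs \<omega>"
  proof (cases "c = 0")
    case True then show ?thesis by simp
  next
    case False
    then have c0: "0 < c" by (simp add: zero_less_iff_neq_zero)
    obtain g where gm[measurable]: "g \<in> borel_measurable M" and gf: "lpn M p (\<lambda>y. ennreal \<bar>g y\<bar>) < \<infinity>"
      and int: "integrable M (\<lambda>y. K y * g y)" and pos: "0 < (\<integral>y. K y * g y \<partial>M)"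
      and cg: "c * lpn M p (\<lambda>y. ennreal \<bar>g y\<bar>) \<le> ennreal (\<integral>y. K y * g y \<partial>M)"
      using sharp[OF fm K_meas p1 q1 conj K_fin c0 cK] by blast
    define f where "f x = (\<integral>y. \<Phi> x y * g y \<partial>M)" for x
    have P: "is_potential M p \<Phi> g f"
      unfolding is_potential_def f_def using gf row_int[OF gm gf] by auto
    then have fH: "in_H M p \<Phi> f" unfolding in_H_def by blast
    have QE: "quad_err M N xs \<omega> f = (\<integral>y. K y * g y \<partial>M)" by (rule pot_props(2)[OF P])
    define G where "G = lpn M p (\<lambda>y. ennreal \<bar>g y\<bar>)"
    define H where "H = H_norm M p \<Phi> f"
    have HG: "H \<le> G" unfolding H_def G_def by (rule H_le[OF P])
    have Hfin: "H \<noteq> top" using HG gf G_def by (auto simp: top_unique)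
    have H0: "H \<noteq> 0"
    proof
      assume "H = 0"
      then have "ennreal \<bar>quad_err M N xs \<omega> f\<bar> \<le> 0" using upper[OF fH] H_def by simp
      then show False using pos QE by simp
    qed
    have "ennreal \<bar>quad_err M N xs \<omega> f\<bar> / H \<le> err_norm M p \<Phi> N xs \<omega>"
      unfolding err_norm_def H_def using fH H0 H_def by (intro SUP_upper) auto
    moreover have "c \<le> ennreal \<bar>quad_err M N xs \<omega> f\<bar> / H"
    proof -
      have "c * H \<le> c * G" using HG by (rule mult_left_mono) simp
      also have "\<dots> \<le> ennreal \<bar>quad_err M N xs \<omega> f\<bar>" using cg pos QE G_def by simp
      finally have "c * H / H \<le> ennreal \<bar>quad_err M N xs \<omega> f\<bar> / H" by (rule divide_right_mono_ennreal)
      then show ?thesis using H0 Hfin by (simp add: mult_divide_eq_ennreal)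
    qed
    ultimately show ?thesis by (rule order_trans[rotated])
  qed
qed

lemma main:
  shows "(\<forall>f. in_H M p \<Phi> f \<longrightarrow> integrable M f)
    \<and> (\<forall>f. in_H M p \<Phi> f \<longrightarrow>
          ennreal \<bar>quad_err M N xs \<omega> f\<bar> \<le> err_norm M p \<Phi> N xs \<omega> * H_norm M p \<Phi> f)
    \<and> err_norm M p \<Phi> N xs \<omega> < \<infinity>
    \<and> err_norm M p \<Phi> N xs \<omega> =
        lpn M q (\<lambda>y. ennreal \<bar>\<Sum>j<N. (LINT x:X j|M. (\<Phi> (xs j) y - \<Phi> x y))\<bar>)"
proof -
  have E: "err_norm M p \<Phi> N xs \<omega> = Lq" using err_le err_ge by (rule antisym)
  have KK: "(\<lambda>y. ennreal \<bar>\<Sum>j<N. (LINT x:X j|M. (\<Phi> (xs j) y - \<Phi> x y))\<bar>) = (\<lambda>y. ennreal \<bar>K y\<bar>)"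
    by (simp add: K_def)
  show ?thesis
  proof (intro conjI allI impI)
    fix f assume "in_H M p \<Phi> f"
    then obtain g where "is_potential M p \<Phi> g f" unfolding in_H_def by blast
    then show "integrable M f" by (rule pot_props(1))
  next
    fix f assume "in_H M p \<Phi> f"
    then show "ennreal \<bar>quad_err M N xs \<omega> f\<bar> \<le> err_norm M p \<Phi> N xs \<omega> * H_norm M p \<Phi> f"
      unfolding E by (rule upper)
  next
    show "err_norm M p \<Phi> N xs \<omega> < \<infinity>" unfolding E by (rule K_fin)
  next
    show "err_norm M p \<Phi> N xs \<omega> = lpn M q (\<lambda>y. ennreal \<bar>\<Sum>j<N. (LINT x:X j|M. (\<Phi> (xs j) y - \<Phi> x y))\<bar>)"
      unfolding E KK ..
  qed
qed

end

theorem lemma2: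
  fixes M :: "'a measure" and N :: nat and X :: "nat \<Rightarrow> 'a set" and \<omega> :: "nat \<Rightarrow> real"
    and xs :: "nat \<Rightarrow> 'a" and p q :: ennreal and \<Phi> :: "'a \<Rightarrow> 'a \<Rightarrow> real"
  assumes sets: "\<And>j. j < N \<Longrightarrow> X j \<in> sets M"
    and disj: "disjoint_family_on X {..<N}"
    and union: "(\<Union>j<N. X j) = space M"
    and meas: "\<And>j. j < N \<Longrightarrow> emeasure M (X j) = ennreal (\<omega> j)"
    and wpos: "\<And>j. j < N \<Longrightarrow> \<omega> j > 0"
    and nodes: "\<And>j. j < N \<Longrightarrow> xs j \<in> X j"
    and p1: "1 \<le> p" and q1: "1 \<le> q" and conj: "inverse p + inverse q = 1"
    and \<Phi>_meas: "(\<lambda>(x, y). \<Phi> x y) \<in> borel_measurable (M \<Otimes>\<^sub>M M)"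
    and \<Phi>_row: "\<forall>x\<in>space M. lpn M q (\<lambda>y. ennreal \<bar>\<Phi> x y\<bar>) < \<infinity>"
    and \<Phi>_col: "lpn M q (\<lambda>y. \<integral>\<^sup>+ x. ennreal \<bar>\<Phi> x y\<bar> \<partial>M) < \<infinity>"
  shows "(\<forall>f. in_H M p \<Phi> f \<longrightarrow> integrable M f)
    \<and> (\<forall>f. in_H M p \<Phi> f \<longrightarrow>
          ennreal \<bar>quad_err M N xs \<omega> f\<bar> \<le> err_norm M p \<Phi> N xs \<omega> * H_norm M p \<Phi> f)
    \<and> err_norm M p \<Phi> N xs \<omega> < \<infinity>
    \<and> err_norm M p \<Phi> N xs \<omega> =
        lpn M q (\<lambda>y. ennreal \<bar>\<Sum>j<N. (LINT x:X j|M. (\<Phi> (xs j) y - \<Phi> x y))\<bar>)"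
proof -
  interpret L2 M N X \<omega> xs p q \<Phi>
    by (unfold_locales) (fact assms)+
  show ?thesis by (rule main)
qed

end
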